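(* Let $n\ge 2$. The fan $F_n$ admits an $(a,d)$-distance antimagic labeling for some integers $a$ and $d\ge 0$ if and only if $n=2$ or $n=4$.
   Context: The fan $F_n$ is obtained from a path $x_1x_2\cdots x_n$ by adding a center vertex $x_0$ adjacent to all of $x_1,\dots,x_n$; it has $n+1$ vertices. For a graph $G=(V,E)$ with $v=|V|$ and a bijection $f:V\to\{1,\dots,v\}$, the vertex-weight of $x$ is $w(x)=\sum_{y\in N(x)}f(y)$ with $N(x)$ the set of neighbours of $x$. For integers $a$ and $d\ge0$, $f$ is an $(a,d)$-distance antimagic labeling if the multiset of vertex-weights equals $\{a,a+d,\dots,a+(v-1)d\}$ (for $d=0$: all weights equal). *)

theory Defs
  imports Main "HOL-Library.Multiset"
begin

text \<open>A finite simple graph is given by a finite vertex set V and a symmetric,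
irreflexive adjacency relation E. The open neighbourhood of x is
N(x) = {y in V. E x y}.\<close>

definition neighbours :: "'a set \<Rightarrow> ('a \<Rightarrow> 'a \<Rightarrow> bool) \<Rightarrow> 'a \<Rightarrow> 'a set" where
  "neighbours V E x = {y \<in> V. E x y}"

definition vertex_weight :: "'a set \<Rightarrow> ('a \<Rightarrow> 'a \<Rightarrow> bool) \<Rightarrow> ('a \<Rightarrow> nat) \<Rightarrow> 'a \<Rightarrow> nat" where
  "vertex_weight V E f x = (\<Sum>y\<in>neighbours V E x. f y)"

definition dist_antimagic ::
  "'a set \<Rightarrow> ('a \<Rightarrow> 'a \<Rightarrow> bool) \<Rightarrow> ('a \<Rightarrow> nat) \<Rightarrow> int \<Rightarrow> int \<Rightarrow> bool" where
  "dist_antimagic V E f a d \<longleftrightarrow>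
     bij_betw f V {1..card V} \<and>
     image_mset (\<lambda>x. int (vertex_weight V E f x)) (mset_set V)
       = image_mset (\<lambda>i. a + int i * d) (mset_set {0..<card V})"

text \<open>The fan F_n: vertices 0..n, center 0, path 1-2-...-n, center adjacent to all of 1..n.\<close>
definition fan_vertices :: "nat \<Rightarrow> nat set" where
  "fan_vertices n = {0..n}"

definition fan_adj :: "nat \<Rightarrow> nat \<Rightarrow> nat \<Rightarrow> bool" where
  "fan_adj n x y \<longleftrightarrow>
     (x = 0 \<and> 1 \<le> y \<and> y \<le> n) \<or> (y = 0 \<and> 1 \<le> x \<and> x \<le> n) \<or>
     (1 \<le> x \<and> x \<le> n \<and> 1 \<le> y \<and> y \<le> n \<and> (y = x + 1 \<or> x = y + 1))"

end

theory Submission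
  imports Defs
begin

lemma path_w:
  assumes "1 \<le> x" "x \<le> n"
  shows "vertex_weight {0..n} (fan_adj n) f x
     = f 0 + (if 1 < x then f (x-1) else 0) + (if x < n then f (x+1) else 0)"
proof -
  have N: "neighbours {0..n} (fan_adj n) x
     = insert 0 ((if 1<x then {x-1} else {}) \<union> (if x<n then {x+1} else {}))"
    using assms by (auto simp: neighbours_def fan_adj_def)
  show ?thesis unfolding vertex_weight_def N
    using assms by (cases "1<x"; cases "x<n") auto
qed

lemma center_w:
  "vertex_weight {0..n} (fan_adj n) f 0 = (\<Sum>i\<in>{1..n}. f i)"
proof -
  have "neighbours {0..n} (fan_adj n) 0 = {1..n}"
    by (auto simp: neighbours_def fan_adj_def)
  then show ?thesis unfolding vertex_weight_def by simp
qed

lemma neg: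
  assumes n3: "n \<ge> 3" and n4: "n \<noteq> 4" and d0: "d \<ge> 0"
    and DA: "dist_antimagic (fan_vertices n) (fan_adj n) f a d"
  shows False
proof -
  define W where "W x = int (vertex_weight {0..n} (fan_adj n) f x)" for x
  have cardV: "card {0..n} = n+1" by simp
  have bij: "bij_betw f {0..n} {1..n+1}" and
    M: "image_mset W (mset_set {0..n}) = image_mset (\<lambda>i. a + int i * d) (mset_set {0..<n+1})"
    using DA unfolding dist_antimagic_def fan_vertices_def W_def[abs_def] cardV by auto
  have rng: "1 \<le> f i \<and> f i \<le> n+1" if "i \<le> n" for i
    using bij_betw_apply[OF bij, of i] that by auto
  have inj: "f i \<noteq> f j" if "i \<le> n" "j \<le> n" "i \<noteq> j" for i j
    using bij that unfolding bij_betw_def inj_on_def by auto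
  define S where "S = (\<Sum>i\<in>{0..n}. f i)"
  have "S = (\<Sum>j\<in>{1..n+1}. j)"
    unfolding S_def using sum.reindex_bij_betw[OF bij, of "\<lambda>j. j"] by simp
  then have S2: "2 * S = (n+1)*(n+2)"
    using double_gauss_sum_from_Suc_0[of "n+1", where ?'a = nat] by simp
  define c where "c = f 0"
  have Sc: "S = c + (\<Sum>i\<in>{1..n}. f i)"
    unfolding S_def c_def by (simp add: sum.atLeast_Suc_atMost)
  have W0: "W 0 = int S - int c"
    unfolding W_def center_w using Sc by simp
  have Wp: "W x = int c + (if 1 < x then int (f (x-1)) else 0) + (if x < n then int (f (x+1)) else 0)"
    if "1 \<le> x" "x \<le> n" for x
    unfolding W_def c_def using path_w[OF that, of f] by simp
  have M1: "\<exists>i<n+1. W x = a + int i * d" if "x \<le> n" for x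
  proof -
    have "W x \<in># image_mset W (mset_set {0..n})" using that by simp
    then show ?thesis unfolding M by auto
  qed
  have M2: "\<exists>x\<le>n. W x = a + int i * d" if "i < n+1" for i
  proof -
    have "a + int i * d \<in># image_mset (\<lambda>i. a + int i * d) (mset_set {0..<n+1})" using that by force
    then show ?thesis unfolding M[symmetric] by auto
  qed
  have c_rng: "1 \<le> c" "c \<le> n+1" using rng[of 0] unfolding c_def by auto
  have Wb: "W x \<ge> int c + 1 \<and> W x \<le> int c + 2 * int n + 1 \<and> W x + int c \<le> 4 * int n + 1"
    if "1\<le>x" "x\<le>n" for x
  proof -
    have r1: "1 \<le> f (x-1)" "f (x-1) \<le> n+1" using rng[of "x-1"] that by auto
    have r2: "1 \<le> f (x+1)" "f (x+1) \<le> n+1" if "x<n" using rng[of "x+1"] that by auto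
    have a1: "f (x-1) \<noteq> c" if "1<x" using inj[of "x-1" 0] that \<open>x\<le>n\<close> unfolding c_def by auto
    have a2: "f (x+1) \<noteq> c" if "x<n" using inj[of "x+1" 0] that unfolding c_def by auto
    have a3: "f (x+1) \<noteq> f (x-1)" if "x<n" using inj[of "x+1" "x-1"] that by auto
    show ?thesis
    proof (cases "1<x")
      case T1: True
      show ?thesis
      proof (cases "x<n")
        case True
        then show ?thesis using Wp[OF that] T1 r1 r2 a1 a2 a3 c_rng by auto
      next
        case False
        then show ?thesis using Wp[OF that] T1 r1 a1 c_rng by auto
      qed
    next
      case F1: False
      then have "x < n" using that n3 by auto
      then show ?thesis using Wp[OF that] F1 r2 a2 c_rng by auto
    qed
  qed
  have W1: "W 1 = int c + int (f 2)" using Wp[of 1] n3 by (simp add: numeral_eq_Suc)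
  show False
  proof (cases "d = 0")
    case True
    then have Wa: "W x = a" if "x \<le> n" for x using M1[OF that] by auto
    show False
    proof (cases "n = 3")
      case True
      have "S = 10" using S2 True by simp
      moreover have "S = c + f 1 + f 2 + f 3" using Sc True by (simp add: numeral_eq_Suc)
      moreover have "W 2 = int c + int (f 1) + int (f 3)" using Wp[of 2] True by simp
      ultimately have "c = f 2" using W0 W1 Wa[of 0] Wa[of 1] Wa[of 2] True by auto
      then show False using inj[of 0 2] True unfolding c_def by auto
    next
      case False
      then have "n \<ge> 5" using n3 n4 by auto
      have "W 3 = int c + int (f 2) + int (f 4)" using Wp[of 3] \<open>n\<ge>5\<close> by simp
      then show False using W1 Wa[of 1] Wa[of 3] rng[of 4] \<open>n\<ge>5\<close> by auto
    qed
  next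
    case False
    then have dpos: "d > 0" using d0 by auto
    have mono: "int i * d < int j * d" if "i < j" for i j
      using dpos that by (simp add: mult_strict_right_mono)
    have mono0: "int i * d \<ge> 0" for i using dpos by simp
    show False
    proof (cases "n = 3")
      case True
      have W3: "W 3 = W 1" using Wp[of 3] W1 True by simp
      define g where "g i = a + int i * d" for i
      have ginj: "inj_on g {0..<4}" unfolding inj_on_def g_def using dpos by auto
      have sub: "g ` {0..<4} \<subseteq> {W 0, W 1, W 2}"
      proof
        fix v assume "v \<in> g ` {0..<4}"
        then obtain i where i: "i < 4" "v = g i" by auto
        then obtain x where x: "x \<le> 3" "W x = v" using M2[of i] True unfolding g_def by auto
        then have "x = 0 \<or> x = 1 \<or> x = 2 \<or> x = 3" by auto
        then show "v \<in> {W 0, W 1, W 2}" using x W3 by auto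
      qed
      have "card (g ` {0..<4}) = 4" using card_image[OF ginj] by simp
      moreover have "card {W 0, W 1, W 2} \<le> 3" by (simp add: card_insert_if)
      moreover have "card (g ` {0..<4}) \<le> card {W 0, W 1, W 2}" using card_mono[OF _ sub] by simp
      ultimately show False by simp
    next
      case False
      then have n5: "n \<ge> 5" using n3 n4 by auto
      have nn: "n * n \<ge> 5 * n" using n5 by simp
      have S2': "2 * int S = int n * int n + 3 * int n + 2"
      proof -
        have "int (2*S) = int ((n+1)*(n+2))" using S2 by simp
        then show ?thesis by (simp add: algebra_simps)
      qed
      have nn': "int n * int n \<ge> 5 * int n" using nn by (metis of_nat_le_iff of_nat_mult of_nat_numeral)
      obtain j0 where j0: "j0 < n+1" "W 0 = a + int j0 * d" using M1[of 0] by auto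
      show False
      proof (cases "j0 = 0")
        case True
        obtain i1 where "W 1 = a + int i1 * d" using M1[of 1] n5 by auto
        then have "W 1 \<ge> W 0" using j0 True mono0[of i1] by simp
        then show False using W1 W0 rng[of 2] n5 c_rng S2' nn' by auto
      next
        case False
        show False
        proof (cases "j0 < n")
          case True
          obtain x where x: "x \<le> n" "W x = a + int n * d" using M2[of n] by auto
          have lt: "W 0 < W x" using mono[OF True] j0 x by simp
          have "x \<noteq> 0"
          proof
            assume "x = 0" then show False using lt by simp
          qed
          then show False using Wb[of x] x lt W0 S2' nn' by auto
        next
          case False
          then have jn: "j0 = n" using j0 by auto
          obtain x where x: "x \<le> n" "W x = a + int 0 * d" using M2[of 0] by auto
          have "\<exists>y\<le>n. W y = a + int (n-1) * d" using M2[of "n-1"] by simp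
          then obtain y where y: "y \<le> n" "W y = a + int (n-1) * d" by blast
          have m0: "int 0 * d < int n * d" using mono[of 0 n] n5 by simp
          have m1: "int (n-1) * d < int n * d" using mono[of "n-1" n] n5 by simp
          have "x \<noteq> 0"
          proof
            assume "x = 0" then show False using x(2) j0(2) jn m0 by auto
          qed
          have "y \<noteq> 0"
          proof
            assume "y = 0" then show False using y(2) j0(2) jn m1 by auto
          qed
          have bx: "W x \<ge> int c + 1" using Wb[of x] \<open>x\<noteq>0\<close> x(1) by simp
          have by1: "W y \<le> int c + 2 * int n + 1" "W y + int c \<le> 4 * int n + 1"
            using Wb[of y] \<open>y\<noteq>0\<close> y(1) by simp_all
          have Wx: "W x = a" using x(2) by simp
          have nm1: "int (n-1) = int n - 1" using n5 by simp
          have Wy: "W y = a + int n * d - d" using y(2) unfolding nm1 by (simp add: algebra_simps)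
          have Wn: "W 0 = W y + d" using j0(2) jn Wy by simp
          have "int n * d - d \<le> 2 * int n" using bx by1 Wx Wy by linarith
          have d2: "d \<le> 2"
          proof (rule ccontr)
            assume "\<not> d \<le> 2"
            then have "(int n - 1) * d \<ge> (int n - 1) * 3" using n5 by (intro mult_left_mono) auto
            then have "int n * d - d \<ge> 3 * int n - 3" by (simp add: algebra_simps)
            then show False using \<open>int n * d - d \<le> 2 * int n\<close> n5 \<open>\<not> d \<le> 2\<close> by linarith
          qed
          have Sle: "int S \<le> 4 * int n + 3" using Wn W0 by1 d2 by linarith
          show False
          proof (cases "n = 5")
            case False
            then have "n * n \<ge> 6 * n" using n5 by simp
            then have "int n * int n \<ge> 6 * int n" by (metis of_nat_le_iff of_nat_mult of_nat_numeral)
            then show False using Sle S2' n5 by linarith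
          next
            case n5e: True
            have S21: "int S = 21" using S2' n5e by simp
            have s15: "{1..5::nat} = {1,2,3,4,5}" by auto
            have Ssum: "int S = int c + int (f 1) + int (f 2) + int (f 3) + int (f 4) + int (f 5)"
            proof -
              have e: "sum f {1..5::nat} = f 1 + f 2 + f 3 + f 4 + f 5" unfolding s15 by simp
              have "S = c + sum f {1..5::nat}" using Sc n5e by simp
              then show ?thesis using e by simp
            qed
            have w1: "W 1 = int c + int (f 2)" using W1 .
            have w2: "W 2 = int c + int (f 1) + int (f 3)" using Wp[of 2] n5e by (simp add: numeral_eq_Suc)
            have w3: "W 3 = int c + int (f 2) + int (f 4)" using Wp[of 3] n5e by (simp add: numeral_eq_Suc)
            have w4: "W 4 = int c + int (f 3) + int (f 5)" using Wp[of 4] n5e by (simp add: numeral_eq_Suc)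
            have w5: "W 5 = int c + int (f 4)" using Wp[of 5] n5e by (simp add: numeral_eq_Suc)
            have a0: "W 0 = a + 5 * d" using j0(2) jn n5e by simp
            have f15: "f 1 \<ge> 1" "f 5 \<ge> 1" using rng[of 1] rng[of 5] n5e by auto
            have "d = 1 \<or> d = 2" using dpos d2 by auto
            then show False
            proof
              assume d1: "d = 1"
              have "sum W {0..n} = sum (\<lambda>i. a + int i * d) {0..<n+1}"
                using M by (metis sum_unfold_sum_mset)
              then have sm: "sum W {0..5::nat} = sum (\<lambda>i. a + int i * d) {0..<6}" using n5e by simp
              have s1: "{0..5::nat} = {0,1,2,3,4,5}" "{0..<6::nat} = {0,1,2,3,4,5}" by auto
              have e1: "sum W {0..5::nat} = W 0 + W 1 + W 2 + W 3 + W 4 + W 5" unfolding s1 by simp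
              have e2: "sum (\<lambda>i. a + int i * d) {0..<6::nat} = 6 * a + 15 * d" unfolding s1 by simp
              have "W 0 + W 1 + W 2 + W 3 + W 4 + W 5 = 6 * a + 15 * d" using sm e1 e2 by simp
              then show False using w1 w2 w3 w4 w5 a0 W0 S21 Ssum f15 c_rng n5e d1 by linarith
            next
              assume dd: "d = 2"
              obtain i1 where i1: "W 1 = a + int i1 * d" using M1[of 1] n5e by auto
              obtain i3 where i3: "W 3 = a + int i3 * d" using M1[of 3] n5e by auto
              obtain i5 where i5: "W 5 = a + int i5 * d" using M1[of 5] n5e by auto
              have "a - int c = 2 * (int i3 - int i1 - int i5)"
                using i1 i3 i5 w1 w3 w5 dd by (simp add: algebra_simps)
              moreover have "a + int c = 11" using a0 W0 S21 dd by simp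
              ultimately show False by presburger
            qed
          qed
        qed
      qed
    qed
  qed
qed

lemma ex2: "dist_antimagic (fan_vertices 2) (fan_adj 2) (\<lambda>i. i+1) 3 1"
proof -
  let ?f = "\<lambda>i::nat. i+1"
  have v: "{0..2::nat} = {0,1,2}" by auto
  have v3: "{0..<3::nat} = {0,1,2}" by auto
  have ms: "mset_set {0..2::nat} = {#0,1,2#}" "mset_set {0..<3::nat} = {#0,1,2#}"
    unfolding v v3 by simp_all
  have w0: "vertex_weight {0..2} (fan_adj 2) ?f 0 = 5"
    unfolding center_w by (simp add: numeral_eq_Suc)
  have w1: "vertex_weight {0..2} (fan_adj 2) ?f 1 = 4" using path_w[of 1 2 ?f] by simp
  have w2: "vertex_weight {0..2} (fan_adj 2) ?f 2 = 3" using path_w[of 2 2 ?f] by simp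
  have b: "bij_betw ?f {0..2} {1..3}"
    unfolding bij_betw_def inj_on_def by (auto simp: v image_iff)
  show ?thesis unfolding dist_antimagic_def fan_vertices_def
    using b w0 w1 w2 by (simp add: ms)
qed

lemma ex4: "dist_antimagic (fan_vertices 4) (fan_adj 4) (\<lambda>i. if i = 0 then 5 else i) 7 1"
proof -
  let ?f = "\<lambda>i::nat. if i = 0 then 5 else i"
  have v: "{0..4::nat} = {0,1,2,3,4}" by auto
  have ms: "mset_set {0..4::nat} = {#0,1,2,3,4#}" "mset_set {0..<5::nat} = {#0,1,2,3,4#}"
    by (auto simp: v) (simp add: numeral_eq_Suc lessThan_Suc atLeast0LessThan)
  have w0: "vertex_weight {0..4} (fan_adj 4) ?f 0 = 10"
    unfolding center_w by (simp add: numeral_eq_Suc)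
  have w1: "vertex_weight {0..4} (fan_adj 4) ?f 1 = 7" using path_w[of 1 4 ?f] by simp
  have w2: "vertex_weight {0..4} (fan_adj 4) ?f 2 = 9" using path_w[of 2 4 ?f] by simp
  have w3: "vertex_weight {0..4} (fan_adj 4) ?f 3 = 11" using path_w[of 3 4 ?f] by simp
  have w4: "vertex_weight {0..4} (fan_adj 4) ?f 4 = 8" using path_w[of 4 4 ?f] by simp
  have b: "bij_betw ?f {0..4} {1..5}"
    unfolding bij_betw_def inj_on_def v by (auto simp: image_iff)
  show ?thesis unfolding dist_antimagic_def fan_vertices_def
    using b w0 w1 w2 w3 w4 by (simp add: ms)
qed

theorem mainTheorem13:
  fixes n :: nat
  assumes "n \<ge> 2"
  shows "(\<exists>f a d. d \<ge> 0 \<and> dist_antimagic (fan_vertices n) (fan_adj n) f a d)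
         \<longleftrightarrow> (n = 2 \<or> n = 4)"
proof
  assume "\<exists>f a d. d \<ge> 0 \<and> dist_antimagic (fan_vertices n) (fan_adj n) f a d"
  then obtain f a d where "d \<ge> 0" "dist_antimagic (fan_vertices n) (fan_adj n) f a d" by blast
  then show "n = 2 \<or> n = 4"
  proof (rule_tac ccontr)
    assume "\<not> (n = 2 \<or> n = 4)"
    then have "n \<ge> 3" "n \<noteq> 4" using assms by auto
    then show False using neg \<open>d \<ge> 0\<close> \<open>dist_antimagic (fan_vertices n) (fan_adj n) f a d\<close> by blast
  qed
next
  assume "n = 2 \<or> n = 4"
  then show "\<exists>f a d. d \<ge> 0 \<and> dist_antimagic (fan_vertices n) (fan_adj n) f a d"
  proof
    assume "n = 2" then show ?thesis using ex2 by (intro exI[of _ "\<lambda>i. i+1"] exI[of _ 3] exI[of _ 1]) simp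
  next
    assume "n = 4" then show ?thesis using ex4
      by (intro exI[of _ "\<lambda>i. if i = 0 then 5 else i"] exI[of _ 7] exI[of _ 1]) simp
  qed
qed

end
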